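(* Let $\lambda$ be a nonzero real number. For every integer $n\ge0$ and every real $x$ with $1+\lambda x>0$, \[ \mathrm{Bel}_{n,\lambda}(x)=\sum_{k=0}^{n}(1)_{k,\lambda}\Big(\frac{x}{1+\lambda x}\Big)^{k}S_{2}(n,k). \] In particular, if $1+\lambda>0$, then $\mathrm{Bel}_{n,\lambda}:=\mathrm{Bel}_{n,\lambda}(1)=\sum_{k=0}^{n}(1)_{k,\lambda}\big(\frac{1}{1+\lambda}\big)^{k}S_{2}(n,k)$.
   Context: $(1)_{0,\lambda}=1$, $(1)_{k,\lambda}=1(1-\lambda)\cdots(1-(k-1)\lambda)$ for $k\ge1$. $S_2(n,k)$ are the Stirling numbers of the second kind, defined by $x^n=\sum_{k=0}^nS_2(n,k)(x)_k$ with $(x)_k=x(x-1)\cdots(x-k+1)$. $e_\lambda(x)=(1+\lambda x)^{1/\lambda}$, $e_\lambda^{-1}(x)=(1+\lambda x)^{-1/\lambda}$. The new type degenerate Bell polynomials $\mathrm{Bel}_{n,\lambda}(x)$ are defined by $e_{\lambda}(xe^{t})\,e_{\lambda}^{-1}(x)=\big(\frac{1+\lambda xe^t}{1+\lambda x}\big)^{1/\lambda}=\sum_{n=0}^{\infty}\mathrm{Bel}_{n,\lambda}(x)\frac{t^{n}}{n!}$. *)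

theory Defs
  imports "HOL-Analysis.Analysis" "HOL-Combinatorics.Stirling"
begin

definition deg_fall_one :: "real \<Rightarrow> nat \<Rightarrow> real" where
  "deg_fall_one lam k = (\<Prod>i<k. 1 - real i * lam)"

text \<open>Generating function of the new type degenerate Bell polynomials:
  e_lambda(x e^t) e_lambda^{-1}(x) = ((1 + lambda x e^t)/(1 + lambda x))^(1/lambda).\<close>
definition bel_gf :: "real \<Rightarrow> real \<Rightarrow> real \<Rightarrow> real" where
  "bel_gf lam x t = ((1 + lam * x * exp t) / (1 + lam * x)) powr (1 / lam)"

text \<open>Bel_{n,lambda}(x) = n! times the n-th Taylor coefficient at t = 0 of the generating
  function, i.e. its n-th derivative in t at 0.\<close>
definition Bel :: "nat \<Rightarrow> real \<Rightarrow> real \<Rightarrow> real" where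
  "Bel n lam x = (deriv ^^ n) (bel_gf lam x) 0"

end

theory Submission
  imports Defs
begin

lemma stirling_sum_step:
  fixes T :: "nat \<Rightarrow> real"
  shows "(\<Sum>k\<le>n. real (Stirling n k) * (real k * T k + T (Suc k)))
       = (\<Sum>k\<le>Suc n. real (Stirling (Suc n) k) * T k)"
proof -
  have "(\<Sum>k\<le>Suc n. real (Stirling (Suc n) k) * T k)
      = (\<Sum>k\<le>n. real (Stirling (Suc n) (Suc k)) * T (Suc k))"
    by (subst sum.atMost_Suc_shift) simp
  also have "\<dots> = (\<Sum>k\<le>n. real (Suc k) * real (Stirling n (Suc k)) * T (Suc k))
                  + (\<Sum>k\<le>n. real (Stirling n k) * T (Suc k))"
    by (simp add: sum.distrib[symmetric] algebra_simps)
  also have "(\<Sum>k\<le>n. real (Suc k) * real (Stirling n (Suc k)) * T (Suc k))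
           = (\<Sum>k\<le>n. real k * real (Stirling n k) * T k)"
  proof -
    have "(\<Sum>k\<le>Suc n. real k * real (Stirling n k) * T k)
        = (\<Sum>k\<le>n. real (Suc k) * real (Stirling n (Suc k)) * T (Suc k))"
      by (subst sum.atMost_Suc_shift) (simp del: of_nat_Suc)
    moreover have "(\<Sum>k\<le>Suc n. real k * real (Stirling n k) * T k)
        = (\<Sum>k\<le>n. real k * real (Stirling n k) * T k)"
      by simp
    ultimately show ?thesis by simp
  qed
  finally show ?thesis
    by (simp add: sum.distrib algebra_simps)
qed

lemma aux_alg:
  fixes lam D u E P P' et :: real
  assumes "lam \<noteq> 0"
  shows "D * u ^ k * (real k * E * P + E * ((1 / lam - real k) * P' * (lam * u * et)))
       = real k * (D * u ^ k * E * P) + D * (1 - real k * lam) * (u * u ^ k) * (E * et) * P'"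
  using assms by (simp add: field_simps)

definition BB :: "real \<Rightarrow> real \<Rightarrow> real \<Rightarrow> real" where
  "BB lam x t = (1 + lam * x * exp t) / (1 + lam * x)"

definition TT :: "real \<Rightarrow> real \<Rightarrow> nat \<Rightarrow> real \<Rightarrow> real" where
  "TT lam x k t = deg_fall_one lam k * (x / (1 + lam * x)) ^ k * exp (real k * t)
      * BB lam x t powr (1 / lam - real k)"

definition HH :: "real \<Rightarrow> real \<Rightarrow> nat \<Rightarrow> real \<Rightarrow> real" where
  "HH lam x n t = (\<Sum>k\<le>n. real (Stirling n k) * TT lam x k t)"

lemma TT_deriv:
  assumes lam: "lam \<noteq> 0" and p: "1 + lam * x > 0" and t: "1 + lam * x * exp t > 0"
  shows "(TT lam x k has_real_derivative (real k * TT lam x k t + TT lam x (Suc k) t)) (at t)"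
proof -
  let ?u = "x / (1 + lam * x)"
  have Bpos: "BB lam x t > 0" using p t by (simp add: BB_def)
  have dB0: "(BB lam x has_real_derivative (lam * x * exp t / (1 + lam * x))) (at t)"
  proof -
    have e: "BB lam x = (\<lambda>t. inverse (1 + lam * x) * (1 + lam * x * exp t))"
      by (rule ext) (simp add: BB_def divide_inverse mult.commute)
    have "((\<lambda>t. inverse (1 + lam * x) * (1 + lam * x * exp t)) has_real_derivative
        inverse (1 + lam * x) * (lam * x * exp t)) (at t)"
      by (auto intro!: derivative_eq_intros)
    then show ?thesis unfolding e by (simp add: divide_inverse mult.commute)
  qed
  have dB: "(BB lam x has_real_derivative (lam * ?u * exp t)) (at t)"
    using dB0 by simp
  have dP: "((\<lambda>t. BB lam x t powr (1 / lam - real k)) has_real_derivative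
      (1 / lam - real k) * BB lam x t powr (1 / lam - real k - 1) * (lam * ?u * exp t)) (at t)"
    using DERIV_fun_powr[OF dB Bpos] by simp
  have dE: "((\<lambda>t. exp (real k * t)) has_real_derivative real k * exp (real k * t)) (at t)"
    by (auto intro!: derivative_eq_intros)
  let ?C = "deg_fall_one lam k * ?u ^ k"
  have eT: "TT lam x k = (\<lambda>t. ?C * exp (real k * t) * BB lam x t powr (1 / lam - real k))"
    by (rule ext) (simp add: TT_def)
  have D: "(TT lam x k has_real_derivative
      (?C * (real k * exp (real k * t))) * BB lam x t powr (1 / lam - real k)
      + ((1 / lam - real k) * BB lam x t powr (1 / lam - real k - 1) * (lam * ?u * exp t)) * (?C * exp (real k * t))) (at t)"
    unfolding eT by (rule DERIV_mult[OF DERIV_cmult[OF dE] dP])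
  have "(TT lam x k has_real_derivative
      deg_fall_one lam k * ?u ^ k * (real k * exp (real k * t) * BB lam x t powr (1 / lam - real k)
        + exp (real k * t) * ((1 / lam - real k) * BB lam x t powr (1 / lam - real k - 1) * (lam * ?u * exp t)))) (at t)"
    using D by (simp add: algebra_simps)
  moreover have "deg_fall_one lam k * ?u ^ k * (real k * exp (real k * t) * BB lam x t powr (1 / lam - real k)
        + exp (real k * t) * ((1 / lam - real k) * BB lam x t powr (1 / lam - real k - 1) * (lam * ?u * exp t)))
      = real k * TT lam x k t + TT lam x (Suc k) t"
  proof -
    have e: "exp (real k * t) * exp t = exp (real (Suc k) * t)"
      by (simp add: exp_add[symmetric] algebra_simps)
    have d: "deg_fall_one lam (Suc k) = deg_fall_one lam k * (1 - real k * lam)"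
      by (simp add: deg_fall_one_def)
    have l: "(1 / lam - real k) * lam = 1 - real k * lam" using lam by (simp add: field_simps)
    have q: "1 / lam - real k - 1 = 1 / lam - real (Suc k)" by simp
    show ?thesis
      unfolding TT_def d q e[symmetric] power_Suc by (rule aux_alg[OF lam])
  qed
  ultimately show ?thesis by simp
qed

lemma HH_deriv:
  assumes lam: "lam \<noteq> 0" and p: "1 + lam * x > 0" and t: "1 + lam * x * exp t > 0"
  shows "(HH lam x n has_real_derivative HH lam x (Suc n) t) (at t)"
proof -
  have "((\<lambda>t. \<Sum>k\<le>n. real (Stirling n k) * TT lam x k t) has_real_derivative
      (\<Sum>k\<le>n. real (Stirling n k) * (real k * TT lam x k t + TT lam x (Suc k) t))) (at t)"
    by (intro DERIV_sum DERIV_cmult TT_deriv[OF lam p t])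
  then show ?thesis
    unfolding HH_def[abs_def] stirling_sum_step[of n "\<lambda>k. TT lam x k t"] .
qed

lemma funpow_eq:
  assumes lam: "lam \<noteq> 0" and p: "1 + lam * x > 0"
  shows "\<forall>t. 1 + lam * x * exp t > 0 \<longrightarrow> (deriv ^^ n) (bel_gf lam x) t = HH lam x n t"
proof (induction n)
  case 0
  then show ?case
    by (simp add: HH_def TT_def deg_fall_one_def bel_gf_def BB_def)
next
  case (Suc n)
  let ?S = "{t. 1 + lam * x * exp t > 0}"
  have op: "open ?S"
    by (intro open_Collect_less continuous_intros)
  show ?case
  proof (intro allI impI)
    fix t assume t: "1 + lam * x * exp t > 0"
    have "((deriv ^^ n) (bel_gf lam x) has_real_derivative HH lam x (Suc n) t) (at t)"
      by (rule has_field_derivative_transform_within_open[OF HH_deriv[OF lam p t] op])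
         (use t Suc.IH in auto)
    then show "(deriv ^^ Suc n) (bel_gf lam x) t = HH lam x (Suc n) t"
      by (simp add: DERIV_imp_deriv)
  qed
qed

theorem theorem11:
  fixes lam x :: real and n :: nat
  assumes "lam \<noteq> 0" and "1 + lam * x > 0"
  shows "Bel n lam x = (\<Sum>k\<le>n. deg_fall_one lam k * (x / (1 + lam * x)) ^ k * real (Stirling n k))"
proof -
  have "Bel n lam x = HH lam x n 0"
    using funpow_eq[OF assms, of n] assms(2) by (simp add: Bel_def)
  also have "\<dots> = (\<Sum>k\<le>n. deg_fall_one lam k * (x / (1 + lam * x)) ^ k * real (Stirling n k))"
    using assms(2) by (simp add: HH_def TT_def BB_def mult.commute mult.left_commute)
  finally show ?thesis .
qed

end
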